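(* Let $\gamma>0$, $0<q<1$, and for $\lambda\ge0$ define $f_\lambda(x;\mu)=d(x;\mu)-I(\mu)-\lambda(x^2-\gamma)$ and $g_\lambda(x;\mu)=q\,f_\lambda(0;\mu)+(1-q)f_\lambda(x;\mu)$. Then $\mu_0\in\Lambda(\gamma,q)$ maximizes $I(\mu)$ over $\Lambda(\gamma,q)$ if and only if there exists $\lambda\ge0$ such that $g_\lambda(x;\mu_0)\le0$ for every $x\in\mathbb{R}$. Furthermore, for a maximizer $\mu_0$ and such a $\lambda$, $g_\lambda(x;\mu_0)=0$ for every $x\in S_{\mu_0}\setminus\{0\}$.
   Context: $\phi(t)=\frac{1}{\sqrt{2\pi}}e^{-t^2/2}$; $p_Y(y;\mu)=\mathbb{E}_\mu[\phi(y-X)]$; $d(x;\mu)=\int\phi(y-x)\log\frac{\phi(y-x)}{p_Y(y;\mu)}dy$; $I(\mu)=\int d(x;\mu)\mu(dx)$. $\Lambda(\gamma,q)=\{\mu:\mu(\{0\})\ge q,\ \mathbb{E}_\mu[X^2]\le\gamma\}$. $S_\mu$ is the set of points of increase of $\mu$, i.e. the points $x\in\mathbb{R}$ such that $\mu(O)>0$ for every open set $O\ni x$. *)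

theory Defs
  imports "HOL-Probability.Probability"
begin

definition phi :: "real \<Rightarrow> real" where
  "phi t = exp (- (t^2) / 2) / sqrt (2 * pi)"

definition pY :: "real measure \<Rightarrow> real \<Rightarrow> real" where
  "pY \<mu> y = (\<integral>x. phi (y - x) \<partial>\<mu>)"

definition dens_d :: "real \<Rightarrow> real measure \<Rightarrow> real" where
  "dens_d x \<mu> = (\<integral>y. phi (y - x) * ln (phi (y - x) / pY \<mu> y) \<partial>lborel)"

definition info :: "real measure \<Rightarrow> real" where
  "info \<mu> = (\<integral>x. dens_d x \<mu> \<partial>\<mu>)"

definition Lambda :: "real \<Rightarrow> real \<Rightarrow> real measure set" where
  "Lambda \<gamma> q = {\<mu>. prob_space \<mu> \<and> sets \<mu> = sets borel \<and>
      measure \<mu> {0} \<ge> q \<and> (\<integral>\<^sup>+x. ennreal (x^2) \<partial>\<mu>) \<le> ennreal \<gamma>}"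

definition f_lam :: "real \<Rightarrow> real \<Rightarrow> real \<Rightarrow> real measure \<Rightarrow> real" where
  "f_lam \<gamma> lam x \<mu> = dens_d x \<mu> - info \<mu> - lam * (x^2 - \<gamma>)"

definition g_lam :: "real \<Rightarrow> real \<Rightarrow> real \<Rightarrow> real \<Rightarrow> real measure \<Rightarrow> real" where
  "g_lam \<gamma> q lam x \<mu> = q * f_lam \<gamma> lam 0 \<mu> + (1 - q) * f_lam \<gamma> lam x \<mu>"

definition points_of_increase :: "real measure \<Rightarrow> real set" where
  "points_of_increase \<mu> = {x. \<forall>U. open U \<and> x \<in> U \<longrightarrow> emeasure \<mu> U > 0}"

end

theory Submission
  imports Defs
begin


lemma phi_nd: "phi (y - x) = normal_density x 1 y"
  by (simp add: phi_def normal_density_def)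

lemma phi_pos: "phi t > 0" by (simp add: phi_def)

lemma phi_le: "phi t \<le> 1 / sqrt (2*pi)"
  unfolding phi_def by (simp add: divide_right_mono)

lemma c0_lt1: "1 / sqrt (2*pi) < (1::real)"
proof -
  have "2*pi > 1" using pi_gt3 by simp
  then have "sqrt (2*pi) > 1" by simp
  then show ?thesis by simp
qed

lemma ln_phi: "ln (phi t) = - ln (sqrt (2*pi)) - t^2/2"
  unfolding phi_def by (simp add: ln_div)

lemma phi_meas[measurable]: "phi \<in> borel_measurable borel"
  unfolding phi_def[abs_def] by measurable

lemma phi_cont: "continuous_on UNIV phi"
  unfolding phi_def[abs_def] by (intro continuous_intros) auto

lemma pair_meas:
  assumes "sets M = sets borel" and f: "case_prod f \<in> borel_measurable (borel \<Otimes>\<^sub>M borel)"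
  shows "case_prod f \<in> borel_measurable (lborel \<Otimes>\<^sub>M M)"
  using f by (subst measurable_cong_sets[OF sets_pair_measure_cong[OF sets_lborel assms(1)] refl])

lemma pair_meas2:
  assumes "sets M = sets borel" and f: "case_prod f \<in> borel_measurable (borel \<Otimes>\<^sub>M borel)"
  shows "case_prod f \<in> borel_measurable (M \<Otimes>\<^sub>M lborel)"
  using f by (subst measurable_cong_sets[OF sets_pair_measure_cong[OF assms(1) sets_lborel] refl])

lemma phi_diff_meas: "(\<lambda>(y,x). phi (y - x)) \<in> borel_measurable (borel \<Otimes>\<^sub>M borel)"
  by measurable



definition good :: "real \<Rightarrow> real measure \<Rightarrow> bool" where
  "good q \<rho> \<longleftrightarrow> prob_space \<rho> \<and> sets \<rho> = sets borel \<and> measure \<rho> {0} \<ge> q"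

lemma pY_integrable:
  assumes "prob_space \<rho>" "sets \<rho> = sets borel"
  shows "integrable \<rho> (\<lambda>x. phi (y - x))"
proof -
  interpret prob_space \<rho> by fact
  show ?thesis
  proof (rule integrable_const_bound[where B="1/sqrt(2*pi)"])
    show "AE x in \<rho>. norm (phi (y - x)) \<le> 1 / sqrt (2 * pi)"
      using phi_le phi_pos by (simp add: less_imp_le)
    show "(\<lambda>x. phi (y - x)) \<in> borel_measurable \<rho>"
      using assms(2) by (simp cong: measurable_cong_sets)
  qed
qed

lemma pY_le:
  assumes "prob_space \<rho>" "sets \<rho> = sets borel"
  shows "pY \<rho> y \<le> 1/sqrt(2*pi)"
proof -
  interpret prob_space \<rho> by fact
  have "pY \<rho> y \<le> (\<integral>x. 1/sqrt(2*pi) \<partial>\<rho>)"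
    unfolding pY_def using pY_integrable[OF assms] phi_le
    by (intro integral_mono) auto
  then show ?thesis by (simp add: prob_space)
qed

lemma pY_ge:
  assumes "prob_space \<rho>" "sets \<rho> = sets borel"
  shows "pY \<rho> y \<ge> measure \<rho> {0} * phi y"
proof -
  interpret prob_space \<rho> by fact
  have m0: "{0} \<in> sets \<rho>" using assms(2) by simp
  have "measure \<rho> {0} * phi y = (\<integral>x. indicator {0} x * phi y \<partial>\<rho>)"
    using m0 by simp
  also have "\<dots> \<le> pY \<rho> y"
  proof -
    have ii: "integrable \<rho> (\<lambda>x. indicator {0} x * phi y)"
      using m0 by (intro integrable_mult_left) (auto simp: integrable_indicator_iff less_top[symmetric])
    show ?thesis
    unfolding pY_def using pY_integrable[OF assms] phi_pos m0 ii
    by (intro integral_mono) (auto simp: indicator_def less_imp_le)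
  qed
  finally show ?thesis .
qed

lemma pY_pos:
  assumes "good q \<rho>" "q > 0"
  shows "pY \<rho> y > 0"
proof -
  have "pY \<rho> y \<ge> measure \<rho> {0} * phi y" using assms pY_ge unfolding good_def by blast
  moreover have "measure \<rho> {0} * phi y > 0" using assms phi_pos unfolding good_def by auto
  ultimately show ?thesis by linarith
qed

lemma pY_nn:
  assumes "prob_space \<rho>" "sets \<rho> = sets borel"
  shows "ennreal (pY \<rho> y) = (\<integral>\<^sup>+x. phi (y - x) \<partial>\<rho>)"
  unfolding pY_def using pY_integrable[OF assms] phi_pos
  by (subst nn_integral_eq_integral) (auto simp: less_imp_le)

lemma pY_meas:
  assumes "prob_space \<rho>" "sets \<rho> = sets borel"
  shows "pY \<rho> \<in> borel_measurable borel"
proof -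
  interpret prob_space \<rho> by fact
  have "(\<lambda>(y,x). phi (y - x)) \<in> borel_measurable (lborel \<Otimes>\<^sub>M \<rho>)"
    by (rule pair_meas[OF assms(2)]) measurable
  then have "(\<lambda>y. \<integral>x. phi (y - x) \<partial>\<rho>) \<in> borel_measurable lborel"
    by (rule borel_measurable_lebesgue_integral)
  then show ?thesis unfolding pY_def[abs_def] by simp
qed

definition L :: "real measure \<Rightarrow> real \<Rightarrow> real" where
  "L \<rho> y = - ln (pY \<rho> y)"

lemma L_meas[measurable]:
  assumes "prob_space \<rho>" "sets \<rho> = sets borel"
  shows "L \<rho> \<in> borel_measurable borel"
  unfolding L_def[abs_def] using pY_meas[OF assms] by measurable

lemma L_nonneg:
  assumes "good q \<rho>" "q > 0"
  shows "L \<rho> y \<ge> 0"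
proof -
  have "pY \<rho> y \<le> 1" using pY_le c0_lt1 assms unfolding good_def
    by (meson less_imp_le order_trans)
  then show ?thesis using pY_pos[OF assms] unfolding L_def by simp
qed

lemma L_le:
  assumes "good q \<rho>" "q > 0"
  shows "L \<rho> y \<le> - ln q + ln (sqrt (2*pi)) + y^2/2"
proof -
  have "pY \<rho> y \<ge> q * phi y"
    using pY_ge[of \<rho> y] assms phi_pos unfolding good_def
    by (meson less_imp_le mult_right_mono order_trans)
  then have "ln (q * phi y) \<le> ln (pY \<rho> y)"
    using assms phi_pos pY_pos[OF assms] by (subst ln_le_cancel_iff) auto
  moreover have "ln (q * phi y) = ln q + ln (phi y)" using assms phi_pos[of y] by (simp add: ln_mult)
  ultimately show ?thesis using ln_phi[of y] unfolding L_def by linarith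
qed



lemma int_phi: "has_bochner_integral lborel (\<lambda>y. phi (y - x)) 1"
proof -
  have "has_bochner_integral lborel (normal_density x 1) 1"
    using integral_normal_density[of 1 x] integrable_normal_density[of 1 x]
    by (metis has_bochner_integral_integrable zero_less_one)
  then show ?thesis by (simp add: phi_nd)
qed

lemma int_phi2: "has_bochner_integral lborel (\<lambda>y. phi (y - x) * (y - x)^2) 1"
proof -
  have "has_bochner_integral lborel (\<lambda>y. normal_density x 1 y * (y - x)^(2*1)) (fact (2 * 1) / ((2 / 1\<^sup>2)^1 * fact 1))"
    by (rule normal_moment_even) simp
  then show ?thesis by (simp add: phi_nd)
qed

lemma int_phi1: "has_bochner_integral lborel (\<lambda>y. phi (y - x) * y) x"
  using normal_moment_nz_1[of 1 x] by (simp add: phi_nd)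

lemma int_phisq: "has_bochner_integral lborel (\<lambda>y. phi (y - x) * y^2) (1 + x^2)"
proof -
  have "has_bochner_integral lborel (\<lambda>y. phi (y - x) * (y - x)^2 + 2*x*(phi (y - x) * y) - x^2 * phi (y - x)) (1 + 2*x*x - x^2 * 1)"
    by (intro has_bochner_integral_add has_bochner_integral_diff has_bochner_integral_mult_right
          int_phi int_phi1 int_phi2)
  moreover have "(\<lambda>y. phi (y - x) * (y - x)^2 + 2*x*(phi (y - x) * y) - x^2 * phi (y - x)) = (\<lambda>y. phi (y - x) * y^2)"
    by (auto simp: fun_eq_iff power2_eq_square algebra_simps)
  ultimately show ?thesis by (simp add: power2_eq_square add.commute)
qed

definition Kc :: real where "Kc = - ln (sqrt (2*pi)) - 1/2"

lemma int_philnphi: "has_bochner_integral lborel (\<lambda>y. phi (y - x) * ln (phi (y - x))) Kc"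
proof -
  have "has_bochner_integral lborel (\<lambda>y. (- ln (sqrt (2*pi))) * phi (y - x) - (1/2) * (phi (y - x) * (y - x)^2)) ((- ln (sqrt (2*pi))) * 1 - (1/2) * 1)"
    by (intro has_bochner_integral_diff has_bochner_integral_mult_right int_phi int_phi2)
  moreover have "(\<lambda>y. (- ln (sqrt (2*pi))) * phi (y - x) - (1/2) * (phi (y - x) * (y - x)^2)) = (\<lambda>y. phi (y - x) * ln (phi (y - x)))"
    by (auto simp: fun_eq_iff ln_phi algebra_simps)
  ultimately show ?thesis by (simp add: Kc_def)
qed

definition Dd :: "real measure \<Rightarrow> real \<Rightarrow> real" where
  "Dd \<rho> x = (\<integral>y. phi (y - x) * L \<rho> y \<partial>lborel)"

definition Ac :: "real \<Rightarrow> real" where "Ac q = - ln q + ln (sqrt (2*pi))"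

lemma D_integrable:
  assumes "good q \<rho>" "q > 0"
  shows "integrable lborel (\<lambda>y. phi (y - x) * L \<rho> y)"
proof (rule Bochner_Integration.integrable_bound)
  have "has_bochner_integral lborel (\<lambda>y. Ac q * phi (y - x) + (1/2) * (phi (y - x) * y^2)) (Ac q * 1 + (1/2) * (1 + x^2))"
    by (intro has_bochner_integral_add has_bochner_integral_mult_right int_phi int_phisq)
  then show "integrable lborel (\<lambda>y. Ac q * phi (y - x) + (1/2) * (phi (y - x) * y^2))" by (rule integrable.intros)
  have m: "prob_space \<rho>" "sets \<rho> = sets borel" using assms unfolding good_def by auto
  note [measurable] = L_meas[OF m]
  show "(\<lambda>y. phi (y - x) * L \<rho> y) \<in> borel_measurable lborel" by measurable
  show "AE y in lborel. norm (phi (y - x) * L \<rho> y) \<le> norm (Ac q * phi (y - x) + (1/2) * (phi (y - x) * y^2))"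
  proof (rule AE_I2)
    fix y
    have "0 \<le> phi (y - x) * L \<rho> y" using L_nonneg[OF assms] phi_pos by (simp add: less_imp_le)
    moreover have "phi (y - x) * L \<rho> y \<le> phi (y - x) * (Ac q + y^2/2)"
      using L_le[OF assms, of y] phi_pos[of "y-x"] unfolding Ac_def by (intro mult_left_mono) auto
    ultimately show "norm (phi (y - x) * L \<rho> y) \<le> norm (Ac q * phi (y - x) + (1/2) * (phi (y - x) * y^2))"
      by (simp add: algebra_simps)
  qed
qed

lemma D_nonneg:
  assumes "good q \<rho>" "q > 0"
  shows "Dd \<rho> x \<ge> 0"
  unfolding Dd_def using L_nonneg[OF assms] phi_pos
  by (intro integral_nonneg_AE AE_I2) (simp add: less_imp_le)

lemma D_le:
  assumes "good q \<rho>" "q > 0"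
  shows "Dd \<rho> x \<le> Ac q + (1 + x^2)/2"
proof -
  have h: "has_bochner_integral lborel (\<lambda>y. Ac q * phi (y - x) + (1/2) * (phi (y - x) * y^2)) (Ac q * 1 + (1/2) * (1 + x^2))"
    by (intro has_bochner_integral_add has_bochner_integral_mult_right int_phi int_phisq)
  have "Dd \<rho> x \<le> (\<integral>y. Ac q * phi (y - x) + (1/2) * (phi (y - x) * y^2) \<partial>lborel)"
    unfolding Dd_def
  proof (rule integral_mono)
    show "integrable lborel (\<lambda>y. phi (y - x) * L \<rho> y)" by (rule D_integrable[OF assms])
    show "integrable lborel (\<lambda>y. Ac q * phi (y - x) + (1/2) * (phi (y - x) * y^2))" using h by (rule integrable.intros)
    fix y
      have "phi (y - x) * L \<rho> y \<le> phi (y - x) * (Ac q + y^2/2)"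
        using L_le[OF assms, of y] phi_pos[of "y-x"] unfolding Ac_def by (intro mult_left_mono) auto
      then show "phi (y - x) * L \<rho> y \<le> Ac q * phi (y - x) + (1/2) * (phi (y - x) * y^2)"
        by (simp add: algebra_simps)
  qed
  also have "\<dots> = Ac q + (1 + x^2)/2" using h by (simp add: has_bochner_integral_integral_eq)
  finally show ?thesis .
qed

lemma dens_d_eq:
  assumes "good q \<rho>" "q > 0"
  shows "dens_d x \<rho> = Kc + Dd \<rho> x"
proof -
  have "dens_d x \<rho> = (\<integral>y. phi (y - x) * ln (phi (y - x)) + phi (y - x) * L \<rho> y \<partial>lborel)"
    unfolding dens_d_def L_def
    by (intro Bochner_Integration.integral_cong refl) (simp add: ln_div algebra_simps pY_pos[OF assms] phi_pos
         pY_pos[OF assms, THEN less_imp_neq, symmetric] phi_pos[THEN less_imp_neq, symmetric])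
  also have "\<dots> = Kc + Dd \<rho> x"
    unfolding Dd_def using int_philnphi[of x] D_integrable[OF assms, of x]
    by (subst Bochner_Integration.integral_add) (auto simp: has_bochner_integral_integral_eq intro: integrable.intros)
  finally show ?thesis .
qed

lemma D_nn:
  assumes "good q \<rho>" "q > 0"
  shows "ennreal (Dd \<rho> x) = (\<integral>\<^sup>+y. ennreal (phi (y - x) * L \<rho> y) \<partial>lborel)"
  unfolding Dd_def using D_integrable[OF assms] L_nonneg[OF assms] phi_pos
  by (subst nn_integral_eq_integral) (auto simp: less_imp_le)

lemma D_meas:
  assumes "good q \<rho>" "q > 0"
  shows "Dd \<rho> \<in> borel_measurable borel"
proof -
  have m: "prob_space \<rho>" "sets \<rho> = sets borel" using assms unfolding good_def by auto
  note [measurable] = L_meas[OF m]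
  have "(\<lambda>(x,y). ennreal (phi (y - x) * L \<rho> y)) \<in> borel_measurable (borel \<Otimes>\<^sub>M lborel)"
    by (subst measurable_cong_sets[OF sets_pair_measure_cong[OF refl sets_lborel] refl]) measurable
  then have "(\<lambda>x. \<integral>\<^sup>+y. ennreal (phi (y - x) * L \<rho> y) \<partial>lborel) \<in> borel_measurable borel"
    by (rule lborel.borel_measurable_nn_integral)
  then have "(\<lambda>x. enn2real (\<integral>\<^sup>+y. ennreal (phi (y - x) * L \<rho> y) \<partial>lborel)) \<in> borel_measurable borel"
    by measurable
  moreover have "(\<lambda>x. enn2real (\<integral>\<^sup>+y. ennreal (phi (y - x) * L \<rho> y) \<partial>lborel)) = Dd \<rho>"
    using D_nn[OF assms] D_nonneg[OF assms] by (auto simp: fun_eq_iff simp del: enn2real_ennreal) (metis enn2real_ennreal)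
  ultimately show ?thesis by simp
qed



definition Jn :: "real measure \<Rightarrow> real measure \<Rightarrow> ennreal" where
  "Jn \<mu> \<rho> = (\<integral>\<^sup>+y. ennreal (pY \<mu> y * L \<rho> y) \<partial>lborel)"

lemma nn_phi: "(\<integral>\<^sup>+y. ennreal (phi (y - x)) \<partial>lborel) = 1"
  using int_phi[of x] phi_pos
  by (subst nn_integral_eq_integral) (auto simp: less_imp_le has_bochner_integral_integral_eq intro: integrable.intros)

lemma nn_pY:
  assumes "prob_space \<mu>" "sets \<mu> = sets borel"
  shows "(\<integral>\<^sup>+y. ennreal (pY \<mu> y) \<partial>lborel) = 1"
proof -
  interpret prob_space \<mu> by fact
  interpret pair_sigma_finite \<mu> lborel ..
  have m: "(\<lambda>(x,y). ennreal (phi (y - x))) \<in> borel_measurable (\<mu> \<Otimes>\<^sub>M lborel)"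
    by (rule pair_meas2[OF assms(2)]) measurable
  have "(\<integral>\<^sup>+y. ennreal (pY \<mu> y) \<partial>lborel) = (\<integral>\<^sup>+y. \<integral>\<^sup>+x. ennreal (phi (y - x)) \<partial>\<mu> \<partial>lborel)"
    using pY_nn[OF assms] by simp
  also have "\<dots> = (\<integral>\<^sup>+x. \<integral>\<^sup>+y. ennreal (phi (y - x)) \<partial>lborel \<partial>\<mu>)"
    by (rule Fubini'[OF m])
  also have "\<dots> = 1" by (simp add: nn_phi emeasure_space_1)
  finally show ?thesis .
qed

lemma tonelli_D:
  assumes "prob_space \<mu>" "sets \<mu> = sets borel" "good q \<rho>" "q > 0"
  shows "(\<integral>\<^sup>+x. ennreal (Dd \<rho> x) \<partial>\<mu>) = Jn \<mu> \<rho>"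
proof -
  interpret prob_space \<mu> by fact
  interpret pair_sigma_finite \<mu> lborel ..
  have mr: "prob_space \<rho>" "sets \<rho> = sets borel" using assms unfolding good_def by auto
  note [measurable] = L_meas[OF mr]
  have m: "(\<lambda>(x,y). ennreal (phi (y - x) * L \<rho> y)) \<in> borel_measurable (\<mu> \<Otimes>\<^sub>M lborel)"
    by (rule pair_meas2[OF assms(2)]) measurable
  have "(\<integral>\<^sup>+x. ennreal (Dd \<rho> x) \<partial>\<mu>) = (\<integral>\<^sup>+x. \<integral>\<^sup>+y. ennreal (phi (y - x) * L \<rho> y) \<partial>lborel \<partial>\<mu>)"
    using D_nn[OF assms(3,4)] by simp
  also have "\<dots> = (\<integral>\<^sup>+y. \<integral>\<^sup>+x. ennreal (phi (y - x) * L \<rho> y) \<partial>\<mu> \<partial>lborel)"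
    by (rule Fubini'[OF m, symmetric])
  also have "\<dots> = (\<integral>\<^sup>+y. ennreal (pY \<mu> y * L \<rho> y) \<partial>lborel)"
  proof (rule nn_integral_cong)
    fix y
    have "(\<integral>\<^sup>+x. ennreal (phi (y - x) * L \<rho> y) \<partial>\<mu>) = (\<integral>\<^sup>+x. ennreal (phi (y - x)) * ennreal (L \<rho> y) \<partial>\<mu>)"
      using L_nonneg[OF assms(3,4)] phi_pos by (intro nn_integral_cong) (simp add: ennreal_mult less_imp_le)
    also have "\<dots> = (\<integral>\<^sup>+x. ennreal (phi (y - x)) \<partial>\<mu>) * ennreal (L \<rho> y)"
      by (rule nn_integral_multc) (use assms(2) in \<open>simp cong: measurable_cong_sets\<close>)
    also have "\<dots> = ennreal (pY \<mu> y * L \<rho> y)"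
      using pY_nn[OF assms(1,2)] L_nonneg[OF assms(3,4)] pY_le[OF assms(1,2)]
      by (simp add: ennreal_mult pY_def integral_nonneg_AE less_imp_le phi_pos)
    finally show "(\<integral>\<^sup>+x. ennreal (phi (y - x) * L \<rho> y) \<partial>\<mu>) = ennreal (pY \<mu> y * L \<rho> y)" .
  qed
  finally show ?thesis unfolding Jn_def .
qed



lemma D_int:
  assumes "prob_space \<mu>" "sets \<mu> = sets borel" "(\<integral>\<^sup>+x. ennreal (x^2) \<partial>\<mu>) < \<infinity>"
    "good q \<rho>" "q > 0"
  shows "Jn \<mu> \<rho> < \<infinity>" "integrable \<mu> (Dd \<rho>)" "integral\<^sup>L \<mu> (Dd \<rho>) = enn2real (Jn \<mu> \<rho>)"
proof -
  interpret prob_space \<mu> by fact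
  have Dm: "Dd \<rho> \<in> borel_measurable \<mu>"
    using D_meas[OF assms(4,5)] assms(2) by (simp cong: measurable_cong_sets)
  have "(\<integral>\<^sup>+x. ennreal (Dd \<rho> x) \<partial>\<mu>) \<le> (\<integral>\<^sup>+x. ennreal (\<bar>Ac q\<bar> + 1/2) + ennreal (1/2) * ennreal (x^2) \<partial>\<mu>)"
  proof (rule nn_integral_mono)
    fix x
    have "Dd \<rho> x \<le> (\<bar>Ac q\<bar> + 1/2) + (1/2) * x^2" using D_le[OF assms(4,5), of x] abs_ge_self[of "Ac q"] by (simp add: field_simps)
    then have "ennreal (Dd \<rho> x) \<le> ennreal ((\<bar>Ac q\<bar> + 1/2) + (1/2) * x^2)" by (rule ennreal_leI)
    also have "\<dots> = ennreal (\<bar>Ac q\<bar> + 1/2) + ennreal ((1/2) * x^2)"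
      by (rule ennreal_plus) auto
    also have "ennreal ((1/2) * x^2) = ennreal (1/2) * ennreal (x^2)"
      by (rule ennreal_mult) auto
    finally show "ennreal (Dd \<rho> x) \<le> ennreal (\<bar>Ac q\<bar> + 1/2) + ennreal (1/2) * ennreal (x^2)" .
  qed
  also have "\<dots> = ennreal (\<bar>Ac q\<bar> + 1/2) + ennreal (1/2) * (\<integral>\<^sup>+x. ennreal (x^2) \<partial>\<mu>)"
    using assms(2) by (subst nn_integral_add) (auto simp: nn_integral_cmult emeasure_space_1 cong: measurable_cong_sets)
  also have "\<dots> < \<infinity>" using assms(3) ennreal_less_top[of "1/2"] ennreal_less_top[of "\<bar>Ac q\<bar>+1/2"]
    unfolding infinity_ennreal_def by (simp only: ennreal_add_less_top ennreal_mult_less_top) blast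
  finally have fin: "(\<integral>\<^sup>+x. ennreal (Dd \<rho> x) \<partial>\<mu>) < \<infinity>" .
  then show "Jn \<mu> \<rho> < \<infinity>" using tonelli_D[OF assms(1,2,4,5)] by simp
  show "integrable \<mu> (Dd \<rho>)"
    using Dm D_nonneg[OF assms(4,5)] fin by (intro integrableI_nonneg) auto
  show "integral\<^sup>L \<mu> (Dd \<rho>) = enn2real (Jn \<mu> \<rho>)"
    using Dm D_nonneg[OF assms(4,5)] tonelli_D[OF assms(1,2,4,5)]
    by (subst integral_eq_nn_integral) auto
qed

lemma J_formula:
  assumes "prob_space \<mu>" "sets \<mu> = sets borel" "(\<integral>\<^sup>+x. ennreal (x^2) \<partial>\<mu>) < \<infinity>"
    "good q \<rho>" "q > 0"
  shows "integrable \<mu> (\<lambda>x. dens_d x \<rho>)" "(\<integral>x. dens_d x \<rho> \<partial>\<mu>) = Kc + enn2real (Jn \<mu> \<rho>)"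
proof -
  interpret prob_space \<mu> by fact
  have eq: "(\<lambda>x. dens_d x \<rho>) = (\<lambda>x. Kc + Dd \<rho> x)" using dens_d_eq[OF assms(4,5)] by auto
  show "integrable \<mu> (\<lambda>x. dens_d x \<rho>)" unfolding eq using D_int[OF assms] by auto
  show "(\<integral>x. dens_d x \<rho> \<partial>\<mu>) = Kc + enn2real (Jn \<mu> \<rho>)" unfolding eq using D_int[OF assms]
    by (subst Bochner_Integration.integral_add) (auto simp: prob_space)
qed

lemma gibbs:
  assumes "good q \<mu>" "good q \<rho>" "q > 0"
  shows "Jn \<mu> \<mu> \<le> Jn \<mu> \<rho>"
proof -
  have mm: "prob_space \<mu>" "sets \<mu> = sets borel" using assms unfolding good_def by auto
  have mr: "prob_space \<rho>" "sets \<rho> = sets borel" using assms unfolding good_def by auto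
  note [measurable] = L_meas[OF mm] L_meas[OF mr] pY_meas[OF mm] pY_meas[OF mr]
  have pt: "ennreal (pY \<mu> y * L \<mu> y) + ennreal (pY \<mu> y) \<le> ennreal (pY \<mu> y * L \<rho> y) + ennreal (pY \<rho> y)" for y
  proof -
    let ?a = "pY \<mu> y" and ?b = "pY \<rho> y"
    have a: "?a > 0" and b: "?b > 0" using pY_pos assms by auto
    have "ln (?b / ?a) \<le> ?b / ?a - 1" using a b by (intro ln_le_minus_one) auto
    then have "?a * ln (?b / ?a) \<le> ?a * (?b / ?a - 1)" using a by (intro mult_left_mono) auto
    moreover have "?a * (?b / ?a - 1) = ?b - ?a" using a by (simp add: field_simps)
    moreover have "ln (?b / ?a) = ln ?b - ln ?a" using a b by (simp add: ln_div)
    ultimately have "?a * (ln ?b - ln ?a) \<le> ?b - ?a" by simp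
    then have r: "?a * L \<mu> y + ?a \<le> ?a * L \<rho> y + ?b" unfolding L_def by (simp add: algebra_simps)
    have "ennreal (?a * L \<mu> y) + ennreal ?a = ennreal (?a * L \<mu> y + ?a)"
      using a L_nonneg[OF assms(1,3)] by (simp add: ennreal_plus)
    also have "\<dots> \<le> ennreal (?a * L \<rho> y + ?b)" using r by (rule ennreal_leI)
    also have "\<dots> = ennreal (?a * L \<rho> y) + ennreal ?b"
      using a b L_nonneg[OF assms(2,3)] by (simp add: ennreal_plus)
    finally show ?thesis .
  qed
  have "Jn \<mu> \<mu> + 1 = (\<integral>\<^sup>+y. ennreal (pY \<mu> y * L \<mu> y) + ennreal (pY \<mu> y) \<partial>lborel)"
    unfolding Jn_def using nn_pY[OF mm] by (subst nn_integral_add) auto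
  also have "\<dots> \<le> (\<integral>\<^sup>+y. ennreal (pY \<mu> y * L \<rho> y) + ennreal (pY \<rho> y) \<partial>lborel)"
    using pt by (intro nn_integral_mono) auto
  also have "\<dots> = Jn \<mu> \<rho> + 1"
    unfolding Jn_def using nn_pY[OF mr] by (subst nn_integral_add) auto
  finally have "1 + Jn \<mu> \<mu> \<le> 1 + Jn \<mu> \<rho>" by (simp add: add.commute)
  then show ?thesis by (simp add: ennreal_add_left_cancel_le)
qed



lemma key_bound:
  fixes f :: "real \<Rightarrow> real"
  assumes "prob_space \<mu>" "sets \<mu> = sets borel" "integrable \<mu> f" "0 < q" "q < 1"
    and g: "\<And>x. q * f 0 + (1 - q) * f x \<le> 0"
    and U: "U \<in> sets borel" "0 \<notin> U" "\<delta> \<ge> 0" "\<And>x. x \<in> U \<Longrightarrow> q * f 0 + (1 - q) * f x \<le> - \<delta>"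
  shows "(\<integral>x. f x \<partial>\<mu>) \<le> f 0 * (measure \<mu> {0} - q) / (1 - q) - \<delta> / (1 - q) * measure \<mu> U"
proof -
  interpret prob_space \<mu> by fact
  define b where "b = - q * f 0 / (1 - q)"
  define F where "F x = f 0 * indicator {0} x + b - b * indicator {0} x - (\<delta> / (1 - q)) * indicator U x" for x :: real
  have f0: "f 0 \<le> 0" using g[of 0] by (simp add: algebra_simps)
  have e0: "{0} \<in> sets \<mu>" and eU: "U \<in> sets \<mu>" using assms by auto
  have iF: "integrable \<mu> F"
    unfolding F_def using e0 eU
    by (intro Bochner_Integration.integrable_diff Bochner_Integration.integrable_add integrable_mult_right
        integrable_const integrable_real_indicator) (auto simp: less_top[symmetric])
  have "(\<integral>x. F x \<partial>\<mu>) = f 0 * measure \<mu> {0} + b - b * measure \<mu> {0} - (\<delta> / (1 - q)) * measure \<mu> U"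
    unfolding F_def using e0 eU
    by (subst Bochner_Integration.integral_diff Bochner_Integration.integral_add integral_mult_right;
        (auto intro!: Bochner_Integration.integrable_diff Bochner_Integration.integrable_add integrable_mult_right
        integrable_real_indicator simp: less_top[symmetric] prob_space)?)+
  also have "f 0 * measure \<mu> {0} + b - b * measure \<mu> {0} = f 0 * (measure \<mu> {0} - q) / (1 - q)"
  proof -
    have q1: "1 - q \<noteq> 0" using assms(5) by simp
    have "f 0 * measure \<mu> {0} + b - b * measure \<mu> {0} = (f 0 * measure \<mu> {0} * (1 - q) - q * f 0 * (1 - measure \<mu> {0})) / (1 - q)"
      unfolding b_def using q1 by (simp add: divide_simps) (simp add: algebra_simps)
    also have "f 0 * measure \<mu> {0} * (1 - q) - q * f 0 * (1 - measure \<mu> {0}) = f 0 * (measure \<mu> {0} - q)"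
      by (simp add: algebra_simps)
    finally show ?thesis by simp
  qed
  finally have IF: "(\<integral>x. F x \<partial>\<mu>) = f 0 * (measure \<mu> {0} - q) / (1 - q) - \<delta> / (1 - q) * measure \<mu> U" .
  have "(\<integral>x. f x \<partial>\<mu>) \<le> (\<integral>x. F x \<partial>\<mu>)"
  proof (rule integral_mono[OF assms(3) iF])
    fix x
    show "f x \<le> F x"
    proof (cases "x = 0")
      case True then show ?thesis using U(2) by (simp add: F_def)
    next
      case False
      have q1: "1 - q > 0" using assms by simp
      show ?thesis
      proof (cases "x \<in> U")
        case True
        have "(1 - q) * f x \<le> - \<delta> - q * f 0" using U(4)[OF True] by simp
        then have "f x \<le> (- \<delta> - q * f 0) / (1 - q)" using q1 by (simp add: field_simps)
        moreover have "(- \<delta> - q * f 0) / (1 - q) = - (q * f 0 / (1 - q)) - \<delta>/(1-q)"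
          using q1 by (simp add: diff_divide_distrib)
        ultimately show ?thesis using False True unfolding F_def b_def by simp
      next
        case nU: False
        have "(1 - q) * f x \<le> - q * f 0" using g[of x] by simp
        then have "f x \<le> (- q * f 0) / (1 - q)" using q1 by (simp add: field_simps)
        then show ?thesis using False nU unfolding F_def b_def by (simp add: field_simps)
      qed
    qed
  qed
  then show ?thesis using IF by simp
qed



lemma Lam:
  assumes "\<mu> \<in> Lambda \<gamma> q" "\<gamma> > 0"
  shows "good q \<mu>" "prob_space \<mu>" "sets \<mu> = sets borel" "(\<integral>\<^sup>+x. ennreal (x^2) \<partial>\<mu>) < \<infinity>"
    "integrable \<mu> (\<lambda>x. x^2)" "(\<integral>x. x^2 \<partial>\<mu>) \<le> \<gamma>"
proof -
  show g: "good q \<mu>" "prob_space \<mu>" "sets \<mu> = sets borel" using assms unfolding Lambda_def good_def by auto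
  have le: "(\<integral>\<^sup>+x. ennreal (x^2) \<partial>\<mu>) \<le> ennreal \<gamma>" using assms unfolding Lambda_def by auto
  then show fin: "(\<integral>\<^sup>+x. ennreal (x^2) \<partial>\<mu>) < \<infinity>"
    using ennreal_less_top[of \<gamma>] unfolding infinity_ennreal_def by (meson le_less_trans)
  have m: "(\<lambda>x. x^2) \<in> borel_measurable \<mu>" using g(3) by (simp cong: measurable_cong_sets)
  show "integrable \<mu> (\<lambda>x. x^2)" using m fin by (intro integrableI_nonneg) auto
  have "(\<integral>x. x^2 \<partial>\<mu>) = enn2real (\<integral>\<^sup>+x. ennreal (x^2) \<partial>\<mu>)"
    using m by (subst integral_eq_nn_integral) auto
  also have "\<dots> \<le> enn2real (ennreal \<gamma>)" using le by (intro enn2real_mono) auto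
  finally show "(\<integral>x. x^2 \<partial>\<mu>) \<le> \<gamma>" using assms by simp
qed

lemma info_eq:
  assumes "\<mu> \<in> Lambda \<gamma> q" "\<gamma> > 0" "q > 0"
  shows "info \<mu> = Kc + enn2real (Jn \<mu> \<mu>)"
  unfolding info_def using J_formula[OF Lam(2,3,4)[OF assms(1,2)] Lam(1)[OF assms(1,2)] assms(3)] by simp

lemma info_le_J:
  assumes "\<mu> \<in> Lambda \<gamma> q" "\<rho> \<in> Lambda \<gamma> q" "\<gamma> > 0" "q > 0"
  shows "info \<mu> \<le> (\<integral>x. dens_d x \<rho> \<partial>\<mu>)"
proof -
  note l = Lam[OF assms(1,3)] and r = Lam[OF assms(2,3)]
  have "enn2real (Jn \<mu> \<mu>) \<le> enn2real (Jn \<mu> \<rho>)"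
    using gibbs[OF l(1) r(1) assms(4)] D_int(1)[OF l(2,3,4) r(1) assms(4)] by (intro enn2real_mono) auto
  then show ?thesis using info_eq[OF assms(1,3,4)] J_formula(2)[OF l(2,3,4) r(1) assms(4)] by simp
qed

lemma f_int:
  assumes "\<mu> \<in> Lambda \<gamma> q" "\<rho> \<in> Lambda \<gamma> q" "\<gamma> > 0" "q > 0"
  shows "integrable \<mu> (\<lambda>x. f_lam \<gamma> lam x \<rho>)"
    "(\<integral>x. f_lam \<gamma> lam x \<rho> \<partial>\<mu>) = (\<integral>x. dens_d x \<rho> \<partial>\<mu>) - info \<rho> - lam * ((\<integral>x. x^2 \<partial>\<mu>) - \<gamma>)"
proof -
  note l = Lam[OF assms(1,3)] and r = Lam[OF assms(2,3)]
  interpret prob_space \<mu> by (rule l(2))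
  have i1: "integrable \<mu> (\<lambda>x. dens_d x \<rho>)" by (rule J_formula(1)[OF l(2,3,4) r(1) assms(4)])
  show "integrable \<mu> (\<lambda>x. f_lam \<gamma> lam x \<rho>)" unfolding f_lam_def
    using i1 l(5) by auto
  show "(\<integral>x. f_lam \<gamma> lam x \<rho> \<partial>\<mu>) = (\<integral>x. dens_d x \<rho> \<partial>\<mu>) - info \<rho> - lam * ((\<integral>x. x^2 \<partial>\<mu>) - \<gamma>)"
    unfolding f_lam_def using i1 l(5) by (simp add: prob_space algebra_simps)
qed

lemma g_f: "g_lam \<gamma> q lam x \<mu> = q * f_lam \<gamma> lam 0 \<mu> + (1 - q) * f_lam \<gamma> lam x \<mu>"
  by (simp add: g_lam_def)

lemma sufficiency:
  assumes "\<gamma> > 0" "0 < q" "q < 1" "\<mu>0 \<in> Lambda \<gamma> q" "lam \<ge> 0" "\<forall>x. g_lam \<gamma> q lam x \<mu>0 \<le> 0"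
    "\<mu> \<in> Lambda \<gamma> q"
  shows "info \<mu> \<le> info \<mu>0"
proof -
  note l = Lam[OF assms(7,1)]
  let ?f = "\<lambda>x. f_lam \<gamma> lam x \<mu>0"
  have "(\<integral>x. ?f x \<partial>\<mu>) \<le> ?f 0 * (measure \<mu> {0} - q) / (1 - q) - 0 / (1 - q) * measure \<mu> {}"
    by (rule key_bound[OF l(2,3) f_int(1)[OF assms(7,4,1,2)] assms(2,3)]) (use assms(6) in \<open>auto simp: g_lam_def\<close>)
  also have "\<dots> \<le> 0"
  proof -
    have "?f 0 \<le> 0" using assms(6) by (auto simp: g_lam_def algebra_simps dest: spec[of _ 0])
    moreover have "measure \<mu> {0} - q \<ge> 0" using l(1) unfolding good_def by auto
    ultimately show ?thesis using assms(3) by (simp add: divide_nonpos_pos mult_nonpos_nonneg)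
  qed
  finally have "(\<integral>x. ?f x \<partial>\<mu>) \<le> 0" .
  then have "(\<integral>x. dens_d x \<mu>0 \<partial>\<mu>) \<le> info \<mu>0 + lam * ((\<integral>x. x^2 \<partial>\<mu>) - \<gamma>)"
    using f_int(2)[OF assms(7,4,1,2)] by simp
  also have "\<dots> \<le> info \<mu>0" using l(6) assms(5) by (simp add: mult_nonneg_nonpos)
  finally show ?thesis using info_le_J[OF assms(7,4,1,2)] by simp
qed



definition mix :: "real \<Rightarrow> real measure \<Rightarrow> real measure \<Rightarrow> real measure" where
  "mix t \<mu> \<nu> = bind (measure_pmf (bernoulli_pmf t)) (\<lambda>b. if b then \<nu> else \<mu>)"

locale mixl =
  fixes t :: real and \<mu> \<nu> :: "real measure"
  assumes t: "0 \<le> t" "t \<le> 1"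
    and pm: "prob_space \<mu>" "sets \<mu> = sets borel"
    and pn: "prob_space \<nu>" "sets \<nu> = sets borel"
begin

lemma kern: "(\<lambda>b. if b then \<nu> else \<mu>) \<in> measure_pmf (bernoulli_pmf t) \<rightarrow>\<^sub>M prob_algebra borel"
  using pm pn by (auto simp: space_prob_algebra)

lemma A: "measure_pmf (bernoulli_pmf t) \<in> space (prob_algebra (measure_pmf (bernoulli_pmf t)))"
  by (auto simp: space_prob_algebra measure_pmf.prob_space_axioms)

lemma prob: "prob_space (mix t \<mu> \<nu>)"
  unfolding mix_def by (rule prob_space_bind'[OF A kern])

lemma sets_mix: "sets (mix t \<mu> \<nu>) = sets borel"
  unfolding mix_def by (rule sets_bind'[OF A kern])

lemma nn_mix:
  assumes "f \<in> borel_measurable borel"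
  shows "(\<integral>\<^sup>+x. f x \<partial>mix t \<mu> \<nu>) = ennreal (1 - t) * (\<integral>\<^sup>+x. f x \<partial>\<mu>) + ennreal t * (\<integral>\<^sup>+x. f x \<partial>\<nu>)"
proof -
  have "(\<integral>\<^sup>+x. f x \<partial>mix t \<mu> \<nu>) = (\<integral>\<^sup>+b. \<integral>\<^sup>+x. f x \<partial>(if b then \<nu> else \<mu>) \<partial>measure_pmf (bernoulli_pmf t))"
    unfolding mix_def by (rule nn_integral_bind[OF assms measurable_prob_algebraD[OF kern]])
  also have "\<dots> = (\<integral>\<^sup>+x. f x \<partial>\<nu>) * ennreal t + (\<integral>\<^sup>+x. f x \<partial>\<mu>) * ennreal (1 - t)"
    using t by (subst nn_integral_bernoulli_pmf) auto
  finally show ?thesis by (simp add: mult.commute add.commute)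
qed

lemma emeasure_mix:
  assumes "A \<in> sets borel"
  shows "emeasure (mix t \<mu> \<nu>) A = ennreal (1 - t) * emeasure \<mu> A + ennreal t * emeasure \<nu> A"
proof -
  have "emeasure (mix t \<mu> \<nu>) A = (\<integral>\<^sup>+x. indicator A x \<partial>mix t \<mu> \<nu>)"
    using assms sets_mix by (simp add: nn_integral_indicator)
  also have "\<dots> = ennreal (1 - t) * (\<integral>\<^sup>+x. indicator A x \<partial>\<mu>) + ennreal t * (\<integral>\<^sup>+x. indicator A x \<partial>\<nu>)"
    using assms by (intro nn_mix) auto
  also have "\<dots> = ennreal (1 - t) * emeasure \<mu> A + ennreal t * emeasure \<nu> A"
    using assms pm pn by (simp add: nn_integral_indicator)
  finally show ?thesis .
qed

lemma measure_mix:
  assumes "A \<in> sets borel"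
  shows "measure (mix t \<mu> \<nu>) A = (1 - t) * measure \<mu> A + t * measure \<nu> A"
proof -
  interpret m: prob_space \<mu> by (rule pm)
  interpret n: prob_space \<nu> by (rule pn)
  interpret x: prob_space "mix t \<mu> \<nu>" by (rule prob)
  have "ennreal (measure (mix t \<mu> \<nu>) A) = ennreal ((1 - t) * measure \<mu> A + t * measure \<nu> A)"
    using emeasure_mix[OF assms] t assms pm pn sets_mix
    by (simp add: x.emeasure_eq_measure m.emeasure_eq_measure n.emeasure_eq_measure ennreal_mult ennreal_plus)
  then show ?thesis using t by (subst (asm) ennreal_inj) auto
qed

lemma pY_mix: "pY (mix t \<mu> \<nu>) y = (1 - t) * pY \<mu> y + t * pY \<nu> y"
proof -
  have "ennreal (pY (mix t \<mu> \<nu>) y) = (\<integral>\<^sup>+x. phi (y - x) \<partial>mix t \<mu> \<nu>)"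
    by (rule pY_nn[OF prob sets_mix])
  also have "\<dots> = ennreal (1 - t) * ennreal (pY \<mu> y) + ennreal t * ennreal (pY \<nu> y)"
    by (subst nn_mix) (auto simp: pY_nn[OF pm] pY_nn[OF pn])
  also have "\<dots> = ennreal ((1 - t) * pY \<mu> y + t * pY \<nu> y)"
    using t pm pn by (simp add: ennreal_mult ennreal_plus pY_def integral_nonneg_AE phi_pos less_imp_le)
  finally show ?thesis
    using t pm pn by (subst (asm) ennreal_inj) (auto simp: pY_def integral_nonneg_AE phi_pos less_imp_le)
qed

end



lemma Lam_intro:
  assumes "prob_space M" "sets M = sets borel" "measure M {0} \<ge> q" "(\<integral>\<^sup>+x. ennreal (x^2) \<partial>M) \<le> ennreal \<gamma>"
  shows "M \<in> Lambda \<gamma> q"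
  using assms unfolding Lambda_def by auto

lemma mix_Lam:
  assumes "\<mu> \<in> Lambda \<gamma> q" "\<nu> \<in> Lambda \<gamma> q" "0 \<le> t" "t \<le> 1" "\<gamma> > 0"
  shows "mix t \<mu> \<nu> \<in> Lambda \<gamma> q"
proof -
  note l = Lam[OF assms(1,5)] and r = Lam[OF assms(2,5)]
  interpret mixl t \<mu> \<nu> by (rule mixl.intro) (use assms l(2,3) r(2,3) in auto)
  show ?thesis
  proof (rule Lam_intro[OF prob sets_mix])
    have "measure \<mu> {0} \<ge> q" "measure \<nu> {0} \<ge> q" using l r unfolding good_def by auto
    then have "(1 - t) * q + t * q \<le> (1 - t) * measure \<mu> {0} + t * measure \<nu> {0}"
      using assms by (intro add_mono mult_left_mono) auto
    then show "measure (mix t \<mu> \<nu>) {0} \<ge> q" by (simp add: measure_mix algebra_simps)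
    have a: "(\<integral>\<^sup>+x. ennreal (x^2) \<partial>\<mu>) \<le> ennreal \<gamma>" "(\<integral>\<^sup>+x. ennreal (x^2) \<partial>\<nu>) \<le> ennreal \<gamma>"
      using assms unfolding Lambda_def by auto
    have "(\<integral>\<^sup>+x. ennreal (x^2) \<partial>mix t \<mu> \<nu>) = ennreal (1 - t) * (\<integral>\<^sup>+x. ennreal (x^2) \<partial>\<mu>) + ennreal t * (\<integral>\<^sup>+x. ennreal (x^2) \<partial>\<nu>)"
      by (rule nn_mix) auto
    also have "\<dots> \<le> ennreal (1 - t) * ennreal \<gamma> + ennreal t * ennreal \<gamma>"
      using a by (intro add_mono mult_left_mono) auto
    also have "\<dots> = (ennreal (1 - t) + ennreal t) * ennreal \<gamma>" by (simp add: distrib_right)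
    also have "ennreal (1 - t) + ennreal t = ennreal ((1 - t) + t)"
      using assms by (intro ennreal_plus[symmetric]) auto
    also have "ennreal ((1 - t) + t) * ennreal \<gamma> = ennreal \<gamma>" by simp
    finally show "(\<integral>\<^sup>+x. ennreal (x^2) \<partial>mix t \<mu> \<nu>) \<le> ennreal \<gamma>" .
  qed
qed

lemma Jn_mix:
  assumes "\<mu> \<in> Lambda \<gamma> q" "\<nu> \<in> Lambda \<gamma> q" "0 \<le> t" "t \<le> 1" "\<gamma> > 0" "q > 0"
  shows "Jn (mix t \<mu> \<nu>) (mix t \<mu> \<nu>) = ennreal (1 - t) * Jn \<mu> (mix t \<mu> \<nu>) + ennreal t * Jn \<nu> (mix t \<mu> \<nu>)"
proof -
  note l = Lam[OF assms(1,5)] and r = Lam[OF assms(2,5)]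
  interpret mixl t \<mu> \<nu> by (rule mixl.intro) (use assms l(2,3) r(2,3) in auto)
  note x = Lam[OF mix_Lam[OF assms(1-5)] assms(5)]
  note [measurable] = L_meas[OF x(2,3)] pY_meas[OF l(2,3)] pY_meas[OF r(2,3)]
  have p0: "pY \<mu> y \<ge> 0" "pY \<nu> y \<ge> 0" "L (mix t \<mu> \<nu>) y \<ge> 0" for y
    using pY_pos[OF l(1) assms(6)] pY_pos[OF r(1) assms(6)] L_nonneg[OF x(1) assms(6)]
    by (auto simp: less_imp_le)
  have "Jn (mix t \<mu> \<nu>) (mix t \<mu> \<nu>) = (\<integral>\<^sup>+y. ennreal (1 - t) * ennreal (pY \<mu> y * L (mix t \<mu> \<nu>) y) + ennreal t * ennreal (pY \<nu> y * L (mix t \<mu> \<nu>) y) \<partial>lborel)"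
    unfolding Jn_def pY_mix
  proof (intro nn_integral_cong)
    fix y
    have "((1 - t) * pY \<mu> y + t * pY \<nu> y) * L (mix t \<mu> \<nu>) y = (1 - t) * (pY \<mu> y * L (mix t \<mu> \<nu>) y) + t * (pY \<nu> y * L (mix t \<mu> \<nu>) y)"
      by (simp add: algebra_simps)
    also have "ennreal \<dots> = ennreal ((1 - t) * (pY \<mu> y * L (mix t \<mu> \<nu>) y)) + ennreal (t * (pY \<nu> y * L (mix t \<mu> \<nu>) y))"
      using assms p0[of y] by (intro ennreal_plus) auto
    also have "\<dots> = ennreal (1 - t) * ennreal (pY \<mu> y * L (mix t \<mu> \<nu>) y) + ennreal t * ennreal (pY \<nu> y * L (mix t \<mu> \<nu>) y)"
      using assms p0[of y] by (simp add: ennreal_mult)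
    finally show "ennreal (((1 - t) * pY \<mu> y + t * pY \<nu> y) * L (mix t \<mu> \<nu>) y) = ennreal (1 - t) * ennreal (pY \<mu> y * L (mix t \<mu> \<nu>) y) + ennreal t * ennreal (pY \<nu> y * L (mix t \<mu> \<nu>) y)" .
  qed
  also have "\<dots> = ennreal (1 - t) * Jn \<mu> (mix t \<mu> \<nu>) + ennreal t * Jn \<nu> (mix t \<mu> \<nu>)"
    unfolding Jn_def by (subst nn_integral_add) (auto simp: nn_integral_cmult)
  finally show ?thesis .
qed



lemma step_t:
  assumes "\<gamma> > 0" "q > 0" "\<mu>0 \<in> Lambda \<gamma> q" "\<forall>\<mu>\<in>Lambda \<gamma> q. info \<mu> \<le> info \<mu>0" "\<mu> \<in> Lambda \<gamma> q"
    "0 < t" "t \<le> 1"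
  shows "Jn \<mu> (mix t \<mu>0 \<mu>) \<le> Jn \<mu>0 \<mu>0"
proof -
  define M where "M = mix t \<mu>0 \<mu>"
  have Mlam: "M \<in> Lambda \<gamma> q" unfolding M_def using assms by (intro mix_Lam) auto
  note l0 = Lam[OF assms(3,1)] and l = Lam[OF assms(5,1)] and lm = Lam[OF Mlam assms(1)]
  have fa: "Jn \<mu>0 M < \<infinity>" by (rule D_int(1)[OF l0(2,3,4) lm(1) assms(2)])
  have fb: "Jn \<mu> M < \<infinity>" by (rule D_int(1)[OF l(2,3,4) lm(1) assms(2)])
  have fc: "Jn \<mu>0 \<mu>0 < \<infinity>" by (rule D_int(1)[OF l0(2,3,4) l0(1) assms(2)])
  define a where "a = enn2real (Jn \<mu>0 M)"
  define b where "b = enn2real (Jn \<mu> M)"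
  define c where "c = enn2real (Jn \<mu>0 \<mu>0)"
  have "Jn M M = ennreal (1 - t) * Jn \<mu>0 M + ennreal t * Jn \<mu> M"
    unfolding M_def using assms(6,7) by (intro Jn_mix[OF assms(3,5) _ _ assms(1,2)]) auto
  then have "enn2real (Jn M M) = (1 - t) * a + t * b"
    unfolding a_def b_def using fa fb assms(6,7)
    by (simp add: enn2real_plus enn2real_mult ennreal_mult_less_top)
  moreover have "info M \<le> info \<mu>0" using assms(4) Mlam by auto
  ultimately have 1: "(1 - t) * a + t * b \<le> c"
    using info_eq[OF Mlam assms(1,2)] info_eq[OF assms(3,1,2)] unfolding c_def by simp
  have "c \<le> a" unfolding a_def c_def using gibbs[OF l0(1) lm(1) assms(2)] fa by (intro enn2real_mono) auto
  then have "(1 - t) * c \<le> (1 - t) * a" using assms(7) by (intro mult_left_mono) auto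
  with 1 have "t * b \<le> t * c" by (simp add: algebra_simps)
  then have "b \<le> c" using assms(6) by simp
  then have "ennreal b \<le> ennreal c" by (rule ennreal_leI)
  moreover have "ennreal b = Jn \<mu> M" unfolding b_def using fb by (intro ennreal_enn2real) auto
  moreover have "ennreal c = Jn \<mu>0 \<mu>0" unfolding c_def using fc by (intro ennreal_enn2real) auto
  ultimately show ?thesis unfolding M_def by simp
qed



lemma necessary_J:
  assumes "\<gamma> > 0" "q > 0" "\<mu>0 \<in> Lambda \<gamma> q" "\<forall>\<mu>\<in>Lambda \<gamma> q. info \<mu> \<le> info \<mu>0" "\<mu> \<in> Lambda \<gamma> q"
  shows "(\<integral>x. dens_d x \<mu>0 \<partial>\<mu>) \<le> info \<mu>0"
proof -
  define tn where "tn n = inverse (real (Suc n))" for n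
  have tn: "0 < tn n" "tn n \<le> 1" for n unfolding tn_def by (auto simp: field_simps)
  have tn0: "tn \<longlonglongrightarrow> 0" unfolding tn_def by (rule LIMSEQ_inverse_real_of_nat)
  define M where "M n = mix (tn n) \<mu>0 \<mu>" for n
  have Mlam: "M n \<in> Lambda \<gamma> q" for n unfolding M_def using assms tn[of n] by (intro mix_Lam) auto
  note l0 = Lam[OF assms(3,1)] and l = Lam[OF assms(5,1)]
  define u where "u n y = ennreal (pY \<mu> y * L (M n) y)" for n y
  have um: "u n \<in> borel_measurable borel" for n
  proof -
    note lm = Lam[OF Mlam[of n] assms(1)]
    note [measurable] = L_meas[OF lm(2,3)] pY_meas[OF l(2,3)]
    show ?thesis unfolding u_def by measurable
  qed
  have ulim: "(\<lambda>n. u n y) \<longlonglongrightarrow> ennreal (pY \<mu> y * L \<mu>0 y)" for y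
  proof -
    interpret m0: mixl "tn n" \<mu>0 \<mu> for n by (rule mixl.intro) (use tn l0(2,3) l(2,3) in \<open>auto simp: less_imp_le\<close>)
    have p0: "pY \<mu>0 y > 0" using pY_pos[OF l0(1) assms(2)] .
    have "(\<lambda>n. (1 - tn n) * pY \<mu>0 y + tn n * pY \<mu> y) \<longlonglongrightarrow> (1 - 0) * pY \<mu>0 y + 0 * pY \<mu> y"
      by (intro tendsto_intros tn0)
    then have "(\<lambda>n. pY (M n) y) \<longlonglongrightarrow> pY \<mu>0 y" unfolding M_def m0.pY_mix by simp
    then have "(\<lambda>n. pY \<mu> y * L (M n) y) \<longlonglongrightarrow> pY \<mu> y * L \<mu>0 y"
      unfolding L_def using p0 by (intro tendsto_intros) auto
    then show ?thesis unfolding u_def by (rule tendsto_ennrealI)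
  qed
  have "Jn \<mu> \<mu>0 = (\<integral>\<^sup>+y. liminf (\<lambda>n. u n y) \<partial>lborel)"
    unfolding Jn_def by (intro nn_integral_cong) (metis ulim lim_imp_Liminf trivial_limit_sequentially)
  also have "\<dots> \<le> liminf (\<lambda>n. integral\<^sup>N lborel (u n))"
    by (rule nn_integral_liminf) (use um in simp)
  also have "\<dots> \<le> Jn \<mu>0 \<mu>0"
  proof (rule Liminf_le)
    show "\<forall>\<^sub>F n in sequentially. integral\<^sup>N lborel (u n) \<le> Jn \<mu>0 \<mu>0"
      using step_t[OF assms(1-5) tn] unfolding u_def M_def Jn_def by simp
  qed simp
  finally have le: "Jn \<mu> \<mu>0 \<le> Jn \<mu>0 \<mu>0" .
  have "enn2real (Jn \<mu> \<mu>0) \<le> enn2real (Jn \<mu>0 \<mu>0)"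
    using le D_int(1)[OF l0(2,3,4) l0(1) assms(2)] by (intro enn2real_mono) auto
  then show ?thesis using J_formula(2)[OF l(2,3,4) l0(1) assms(2)] info_eq[OF assms(3,1,2)] by simp
qed



definition P3 :: "real \<Rightarrow> real \<Rightarrow> real \<Rightarrow> real \<Rightarrow> real measure" where
  "P3 q a x1 x2 = mix (1 - q) (return borel 0) (mix (1 - a) (return borel x1) (return borel x2))"

lemma ret: "prob_space (return borel (x::real))" "sets (return borel (x::real)) = sets borel"
  by (auto intro: prob_space_return)

lemma P3_props:
  assumes "0 \<le> q" "q \<le> 1" "0 \<le> a" "a \<le> 1"
  shows "prob_space (P3 q a u v)" "sets (P3 q a u v) = sets borel"
    "\<And>f. f \<in> borel_measurable borel \<Longrightarrow> (\<integral>\<^sup>+x. f x \<partial>P3 q a u v) = ennreal q * f 0 + ennreal (1 - q) * (ennreal a * f u + ennreal (1 - a) * f v)"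
    "measure (P3 q a u v) {0} \<ge> q"
proof -
  interpret i: mixl "1 - a" "return borel u" "return borel v"
    by (rule mixl.intro) (use assms ret in auto)
  interpret o: mixl "1 - q" "return borel 0" "mix (1 - a) (return borel u) (return borel v)"
    by (rule mixl.intro) (use assms ret i.prob i.sets_mix in auto)
  show "prob_space (P3 q a u v)" "sets (P3 q a u v) = sets borel"
    unfolding P3_def by (rule o.prob, rule o.sets_mix)
  show "(\<integral>\<^sup>+x. f x \<partial>P3 q a u v) = ennreal q * f 0 + ennreal (1 - q) * (ennreal a * f u + ennreal (1 - a) * f v)"
    if "f \<in> borel_measurable borel" for f
    unfolding P3_def using that by (simp add: o.nn_mix i.nn_mix nn_integral_return)
  have "measure (P3 q a u v) {0} = q * measure (return borel (0::real)) {0} + (1 - q) * measure (mix (1 - a) (return borel u) (return borel v)) {0}"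
    unfolding P3_def by (subst o.measure_mix) auto
  also have "\<dots> \<ge> q"
  proof -
    have "measure (return borel (0::real)) {0} = 1" by (simp add: measure_def)
    moreover have "(1 - q) * measure (mix (1 - a) (return borel u) (return borel v)) {0} \<ge> 0"
      using assms by (simp add: measure_nonneg)
    ultimately show ?thesis by simp
  qed
  finally show "measure (P3 q a u v) {0} \<ge> q" .
qed

lemma three_point:
  assumes "\<gamma> > 0" "0 < q" "q < 1" "\<mu>0 \<in> Lambda \<gamma> q" "\<forall>\<mu>\<in>Lambda \<gamma> q. info \<mu> \<le> info \<mu>0"
    "0 \<le> a" "a \<le> 1" "(1 - q) * (a * x1^2 + (1 - a) * x2^2) \<le> \<gamma>"
  shows "q * dens_d 0 \<mu>0 + (1 - q) * (a * dens_d x1 \<mu>0 + (1 - a) * dens_d x2 \<mu>0) \<le> info \<mu>0"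
proof -
  let ?P = "P3 q a x1 x2"
  note pp = P3_props[where q=q and a=a and u=x1 and v=x2]
  have pp1: "prob_space ?P" "sets ?P = sets borel" using pp assms by auto
  have nn: "\<And>f. f \<in> borel_measurable borel \<Longrightarrow> (\<integral>\<^sup>+x. f x \<partial>?P) = ennreal q * f 0 + ennreal (1 - q) * (ennreal a * f x1 + ennreal (1 - a) * f x2)"
    using pp assms by auto
  note l0 = Lam[OF assms(4,1)]
  have "(\<integral>\<^sup>+x. ennreal (x^2) \<partial>?P) = ennreal q * ennreal (0^2) + ennreal (1 - q) * (ennreal a * ennreal (x1^2) + ennreal (1 - a) * ennreal (x2^2))"
    by (rule nn) auto
  also have "\<dots> = ennreal ((1 - q) * (a * x1^2 + (1 - a) * x2^2))"
    using assms by (simp add: ennreal_mult[symmetric] ennreal_plus[symmetric] del: ennreal_plus)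
  finally have m2: "(\<integral>\<^sup>+x. ennreal (x^2) \<partial>?P) = ennreal ((1 - q) * (a * x1^2 + (1 - a) * x2^2))" .
  have PL: "?P \<in> Lambda \<gamma> q"
    using pp assms m2 by (intro Lam_intro) (auto intro: ennreal_leI)
  have "(\<integral>x. dens_d x \<mu>0 \<partial>?P) \<le> info \<mu>0" by (rule necessary_J[OF assms(1,2,4,5) PL])
  moreover have "(\<integral>x. dens_d x \<mu>0 \<partial>?P) = Kc + enn2real (Jn ?P \<mu>0)"
    using J_formula(2)[OF Lam(2,3,4)[OF PL assms(1)] l0(1) assms(2)] .
  moreover have "Jn ?P \<mu>0 = ennreal q * ennreal (Dd \<mu>0 0) + ennreal (1 - q) * (ennreal a * ennreal (Dd \<mu>0 x1) + ennreal (1 - a) * ennreal (Dd \<mu>0 x2))"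
    using tonelli_D[OF pp1 l0(1) assms(2), symmetric] nn[of "\<lambda>x. ennreal (Dd \<mu>0 x)"] D_meas[OF l0(1) assms(2)] by simp
  moreover have "\<dots> = ennreal (q * Dd \<mu>0 0 + (1 - q) * (a * Dd \<mu>0 x1 + (1 - a) * Dd \<mu>0 x2))"
    using assms D_nonneg[OF l0(1) assms(2)]
    by (simp add: ennreal_mult[symmetric] ennreal_plus[symmetric] del: ennreal_plus)
  ultimately have "Kc + enn2real (ennreal (q * Dd \<mu>0 0 + (1 - q) * (a * Dd \<mu>0 x1 + (1 - a) * Dd \<mu>0 x2))) \<le> info \<mu>0"
    by (simp only:)
  moreover have "q * Dd \<mu>0 0 + (1 - q) * (a * Dd \<mu>0 x1 + (1 - a) * Dd \<mu>0 x2) \<ge> 0"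
    using assms D_nonneg[OF l0(1) assms(2)] by (intro add_nonneg_nonneg mult_nonneg_nonneg) auto
  ultimately have "Kc + (q * Dd \<mu>0 0 + (1 - q) * (a * Dd \<mu>0 x1 + (1 - a) * Dd \<mu>0 x2)) \<le> info \<mu>0"
    by simp
  then show ?thesis using dens_d_eq[OF l0(1) assms(2)] by (simp add: algebra_simps)
qed



lemma lam_abstract:
  fixes d :: "real \<Rightarrow> real" and I \<gamma> q :: real
  assumes q: "0 < q" "q < 1" and g: "\<gamma> > 0"
    and TP: "\<And>a x1 x2. 0 \<le> a \<Longrightarrow> a \<le> 1 \<Longrightarrow> (1 - q) * (a * x1^2 + (1 - a) * x2^2) \<le> \<gamma> \<Longrightarrow>
              q * d 0 + (1 - q) * (a * d x1 + (1 - a) * d x2) \<le> I"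
  shows "\<exists>lam\<ge>0. \<forall>x. q * d 0 + (1 - q) * d x - I - lam * ((1 - q) * x^2 - \<gamma>) \<le> 0"
proof -
  define h where "h x = q * d 0 + (1 - q) * d x - I" for x
  define s where "s x = (1 - q) * x^2 - \<gamma>" for x
  have TP': "a * h x1 + (1 - a) * h x2 \<le> 0" if "0 \<le> a" "a \<le> 1" "a * s x1 + (1 - a) * s x2 \<le> 0" for a x1 x2
  proof -
    have "(1 - q) * (a * x1^2 + (1 - a) * x2^2) \<le> \<gamma>" using that(3) unfolding s_def by (simp add: algebra_simps)
    from TP[OF that(1,2) this] show ?thesis unfolding h_def by (simp add: algebra_simps)
  qed
  have neg: "h x \<le> 0" if "s x \<le> 0" for x using TP'[of 1 x x] that by simp
  have tp: "h x2 / s x2 \<le> h x1 / s x1" if s1: "s x1 < 0" and s2: "s x2 > 0" for x1 x2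
  proof -
    define a where "a = s x2 / (s x2 - s x1)"
    have den: "s x2 - s x1 > 0" using s1 s2 by simp
    have a0: "0 \<le> a" "a \<le> 1" unfolding a_def using s1 s2 den by (auto simp: field_simps)
    have a1: "1 - a = - s x1 / (s x2 - s x1)" unfolding a_def using den by (simp add: field_simps)
    have "a * s x1 + (1 - a) * s x2 = (s x2 * s x1 + (- s x1) * s x2) / (s x2 - s x1)"
      unfolding a1 unfolding a_def by (simp add: add_divide_distrib diff_divide_distrib)
    then have "a * s x1 + (1 - a) * s x2 = 0" by simp
    then have "a * h x1 + (1 - a) * h x2 \<le> 0" using TP' a0 by simp
    moreover have "a * h x1 + (1 - a) * h x2 = (s x2 * h x1 + (- s x1) * h x2) / (s x2 - s x1)"
      unfolding a1 unfolding a_def by (simp add: add_divide_distrib diff_divide_distrib)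
    ultimately have "(s x2 * h x1 + (- s x1) * h x2) / (s x2 - s x1) \<le> 0" by simp
    then have "s x2 * h x1 - s x1 * h x2 \<le> 0" using den by (simp add: divide_le_0_iff)
    then have "s x2 * h x1 \<le> s x1 * h x2" by simp
    then show ?thesis using s1 s2 by (simp add: field_simps mult.commute)
  qed
  define S where "S = {h x / s x | x. s x > 0}"
  define lam where "lam = max 0 (Sup S)"
  have bdd: "bdd_above S"
    unfolding S_def bdd_above_def using tp[of 0] g by (auto simp: s_def)
  define x0 where "x0 = \<gamma> / (1 - q) + 1"
  have "x0 \<ge> 1" unfolding x0_def using q g by simp
  then have "x0^2 \<ge> x0" by (simp add: power2_eq_square)
  moreover have "x0 > \<gamma> / (1 - q)" unfolding x0_def by simp
  ultimately have "(1 - q) * x0 > \<gamma>" "(1 - q) * x0^2 \<ge> (1 - q) * x0" using q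
    by (simp add: field_simps, intro mult_left_mono, auto)
  then have "(1 - q) * x0^2 > \<gamma>" by linarith
  then have sx0: "s x0 > 0" unfolding s_def by simp
  have ne: "S \<noteq> {}" unfolding S_def using sx0 by auto
  have "q * d 0 + (1 - q) * d x - I - lam * ((1 - q) * x^2 - \<gamma>) \<le> 0" for x
  proof -
    have goal: "h x \<le> lam * s x \<Longrightarrow> ?thesis" unfolding h_def s_def by simp
    show ?thesis
    proof (rule goal)
      consider "s x > 0" | "s x = 0" | "s x < 0" by linarith
      then show "h x \<le> lam * s x"
      proof cases
        case 1
        have "h x / s x \<in> S" unfolding S_def using 1 by auto
        then have "h x / s x \<le> lam" unfolding lam_def using bdd by (simp add: cSup_upper le_max_iff_disj)
        then show ?thesis using 1 by (simp add: divide_le_eq)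
      next
        case 2 then show ?thesis using neg[of x] by simp
      next
        case 3
        have "Sup S \<le> h x / s x"
          using ne by (rule cSup_least) (auto simp: S_def intro: tp[OF 3])
        moreover have "0 \<le> h x / s x" using neg[of x] 3 by (simp add: divide_nonpos_neg)
        ultimately have "lam \<le> h x / s x" unfolding lam_def by simp
        then show ?thesis using 3 by (simp add: le_divide_eq)
      qed
    qed
  qed
  moreover have "lam \<ge> 0" unfolding lam_def by simp
  ultimately show ?thesis by blast
qed



lemma nd2: "sqrt 2 * normal_density 0 (sqrt 2) t = exp (- (t^2) / 4) / sqrt (2*pi)"
proof -
  have "sqrt (2 * pi * (sqrt 2)\<^sup>2) = sqrt (2*pi) * sqrt 2" by (simp add: real_sqrt_mult)
  then show ?thesis unfolding normal_density_def by simp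
qed

lemma phi_dom:
  assumes "\<bar>x\<bar> \<le> R"
  shows "phi (y - x) \<le> exp (R^2/2) * (sqrt 2 * normal_density 0 (sqrt 2) y)"
proof -
  have "\<bar>x\<bar>^2 \<le> R^2" using assms by (intro power_mono) auto
  then have x2: "x^2 \<le> R^2" by simp
  have e: "2 * (y - x)^2 + 2 * x^2 - y^2 = (y - 2*x)^2" by (simp add: power2_eq_square algebra_simps)
  have "0 \<le> (y - 2*x)^2" by simp
  then have "y^2 \<le> 2 * (y - x)^2 + 2 * x^2" using e by linarith
  with x2 have "-((y - x)^2) / 2 \<le> R^2/2 + (- (y^2) / 4)" by linarith
  then have "exp (-((y - x)^2) / 2) \<le> exp (R^2/2 + (- (y^2) / 4))" by simp
  then have "exp (-((y - x)^2) / 2) \<le> exp (R^2/2) * exp (- (y^2) / 4)" by (simp only: exp_add)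
  then have "exp (-((y - x)^2) / 2) / sqrt (2*pi) \<le> exp (R^2/2) * exp (- (y^2) / 4) / sqrt (2*pi)"
    by (rule divide_right_mono) simp
  then show ?thesis unfolding nd2 phi_def by simp
qed

lemma D_cont:
  assumes "good q \<rho>" "q > 0"
  shows "isCont (Dd \<rho>) x"
proof (rule continuous_at_sequentiallyI)
  fix u assume u: "u \<longlonglongrightarrow> x"
  then obtain R where R: "\<And>n. \<bar>u n\<bar> \<le> R" using convergent_imp_Bseq[OF convergentI[OF u]] by (auto simp: Bseq_def) 
  have m: "prob_space \<rho>" "sets \<rho> = sets borel" using assms unfolding good_def by auto
  note [measurable] = L_meas[OF m]
  define w where "w y = exp (R^2/2) * sqrt 2 * (\<bar>Ac q\<bar> * normal_density 0 (sqrt 2) y + (1/2) * (normal_density 0 (sqrt 2) y * (y - 0)^2))" for y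
  have wi: "integrable lborel w" unfolding w_def
    by (intro integrable_mult_right Bochner_Integration.integrable_add integrable_normal_moment integrable_normal_density) auto
  show "(\<lambda>n. Dd \<rho> (u n)) \<longlonglongrightarrow> Dd \<rho> x"
    unfolding Dd_def
  proof (rule integral_dominated_convergence[OF _ _ wi])
    show "(\<lambda>y. phi (y - x) * L \<rho> y) \<in> borel_measurable lborel" by measurable
    show "(\<lambda>y. phi (y - u n) * L \<rho> y) \<in> borel_measurable lborel" for n by measurable
    show "AE y in lborel. (\<lambda>n. phi (y - u n) * L \<rho> y) \<longlonglongrightarrow> phi (y - x) * L \<rho> y"
    proof (rule AE_I2)
      fix y
      have "isCont phi (y - x)" using phi_cont by (simp add: continuous_on_eq_continuous_at)
      then have "(\<lambda>n. phi (y - u n)) \<longlonglongrightarrow> phi (y - x)"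
        by (rule isCont_tendsto_compose) (intro tendsto_intros u)
      then show "(\<lambda>n. phi (y - u n) * L \<rho> y) \<longlonglongrightarrow> phi (y - x) * L \<rho> y" by (intro tendsto_intros)
    qed
    show "AE y in lborel. norm (phi (y - u n) * L \<rho> y) \<le> w y" for n
    proof (rule AE_I2)
      fix y
      have L0: "0 \<le> L \<rho> y" and L1: "L \<rho> y \<le> \<bar>Ac q\<bar> + y^2/2"
        using L_nonneg[OF assms] L_le[OF assms, of y] unfolding Ac_def by auto
      have p: "0 \<le> phi (y - u n)" "phi (y - u n) \<le> exp (R^2/2) * (sqrt 2 * normal_density 0 (sqrt 2) y)"
        using phi_pos phi_dom[OF R[of n]] by (auto simp: less_imp_le)
      have "norm (phi (y - u n) * L \<rho> y) = phi (y - u n) * L \<rho> y" using L0 p by simp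
      also have "\<dots> \<le> (exp (R^2/2) * (sqrt 2 * normal_density 0 (sqrt 2) y)) * (\<bar>Ac q\<bar> + y^2/2)"
        using L0 L1 p by (intro mult_mono) auto
      also have "\<dots> = w y" unfolding w_def by (simp add: algebra_simps)
      finally show "norm (phi (y - u n) * L \<rho> y) \<le> w y" .
    qed
  qed
qed



lemma g_expand: "g_lam \<gamma> q lam x \<mu>0 = q * dens_d 0 \<mu>0 + (1 - q) * dens_d x \<mu>0 - info \<mu>0 - lam * ((1 - q) * x^2 - \<gamma>)"
  by (simp add: g_lam_def f_lam_def algebra_simps)

lemma support:
  assumes "\<gamma> > 0" "0 < q" "q < 1" "\<mu>0 \<in> Lambda \<gamma> q" "lam \<ge> 0" "\<forall>x. g_lam \<gamma> q lam x \<mu>0 \<le> 0"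
    and x1: "x1 \<in> points_of_increase \<mu>0" "x1 \<noteq> 0"
  shows "g_lam \<gamma> q lam x1 \<mu>0 = 0"
proof (rule ccontr)
  assume "g_lam \<gamma> q lam x1 \<mu>0 \<noteq> 0"
  then have neg: "g_lam \<gamma> q lam x1 \<mu>0 < 0" using assms(6) by (meson less_le)
  define G where "G x = g_lam \<gamma> q lam x \<mu>0" for x
  define \<delta> where "\<delta> = - G x1 / 2"
  have dpos: "\<delta> > 0" unfolding \<delta>_def G_def using neg by simp
  note l0 = Lam[OF assms(4,1)]
  have Geq: "G = (\<lambda>x. q * dens_d 0 \<mu>0 + (1 - q) * (Kc + Dd \<mu>0 x) - info \<mu>0 - lam * ((1 - q) * x^2 - \<gamma>))"
    unfolding G_def g_expand using dens_d_eq[OF l0(1) assms(2)] by auto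
  have "isCont G x1" unfolding Geq using D_cont[OF l0(1) assms(2)] by (intro continuous_intros)
  then obtain r where r: "r > 0" "\<And>x. dist x x1 < r \<Longrightarrow> dist (G x) (G x1) < \<delta>"
    unfolding continuous_at_eps_delta using dpos by blast
  define U where "U = ball x1 (min r \<bar>x1\<bar>)"
  have U0: "0 \<notin> U" unfolding U_def by (auto simp: dist_real_def)
  have Uo: "open U" "x1 \<in> U" unfolding U_def using r x1(2) by auto
  have GU: "G x \<le> - \<delta>" if "x \<in> U" for x
  proof -
    have "dist x x1 < r" using that unfolding U_def by (auto simp: dist_commute)
    then have "dist (G x) (G x1) < \<delta>" by (rule r(2))
    then show ?thesis unfolding \<delta>_def dist_real_def by (simp add: \<delta>_def)
  qed
  interpret prob_space \<mu>0 by (rule l0(2))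
  have "emeasure \<mu>0 U > 0" using x1(1) Uo unfolding points_of_increase_def by auto
  then have mU: "measure \<mu>0 U > 0" by (simp add: emeasure_eq_measure)
  let ?f = "\<lambda>x. f_lam \<gamma> lam x \<mu>0"
  have "(\<integral>x. ?f x \<partial>\<mu>0) \<le> ?f 0 * (measure \<mu>0 {0} - q) / (1 - q) - \<delta> / (1 - q) * measure \<mu>0 U"
  proof (rule key_bound[OF l0(2,3) f_int(1)[OF assms(4,4,1,2)] assms(2,3) _ _ U0])
    show "q * ?f 0 + (1 - q) * ?f x \<le> 0" for x using assms(6) by (simp add: g_lam_def)
    show "U \<in> sets borel" using Uo by simp
    show "0 \<le> \<delta>" using dpos by simp
    show "q * ?f 0 + (1 - q) * ?f x \<le> - \<delta>" if "x \<in> U" for x using GU[OF that] by (simp add: G_def g_lam_def)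
  qed
  also have "\<dots> < 0"
  proof -
    have "?f 0 \<le> 0" using assms(6) by (auto simp: g_lam_def algebra_simps dest: spec[of _ 0])
    moreover have "measure \<mu>0 {0} - q \<ge> 0" using l0(1) unfolding good_def by auto
    ultimately have "?f 0 * (measure \<mu>0 {0} - q) / (1 - q) \<le> 0"
      using assms(3) by (simp add: divide_nonpos_pos mult_nonpos_nonneg)
    moreover have "\<delta> / (1 - q) * measure \<mu>0 U > 0" using dpos mU assms(3) by simp
    ultimately show ?thesis by linarith
  qed
  finally have lt: "(\<integral>x. ?f x \<partial>\<mu>0) < 0" .
  have "(\<integral>x. ?f x \<partial>\<mu>0) = - lam * ((\<integral>x. x^2 \<partial>\<mu>0) - \<gamma>)"
    using f_int(2)[OF assms(4,4,1,2)] unfolding info_def by simp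
  also have "\<dots> \<ge> 0" using l0(6) assms(5) by (simp add: mult_nonneg_nonpos)
  finally show False using lt by simp
qed

theorem lemma6:
  fixes \<gamma> q :: real and \<mu>0 :: "real measure"
  assumes "\<gamma> > 0" and "0 < q" and "q < 1"
    and "\<mu>0 \<in> Lambda \<gamma> q"
  shows "((\<forall>\<mu>\<in>Lambda \<gamma> q. info \<mu> \<le> info \<mu>0) \<longleftrightarrow>
           (\<exists>lam\<ge>0. \<forall>x. g_lam \<gamma> q lam x \<mu>0 \<le> 0)) \<and>
         (\<forall>lam. (\<forall>\<mu>\<in>Lambda \<gamma> q. info \<mu> \<le> info \<mu>0) \<and> lam \<ge> 0 \<and>
           (\<forall>x. g_lam \<gamma> q lam x \<mu>0 \<le> 0) \<longrightarrow>
           (\<forall>x \<in> points_of_increase \<mu>0 - {0}. g_lam \<gamma> q lam x \<mu>0 = 0))"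
proof (intro conjI iffI allI impI ballI)
  assume max: "\<forall>\<mu>\<in>Lambda \<gamma> q. info \<mu> \<le> info \<mu>0"
  have "\<exists>lam\<ge>0. \<forall>x. q * dens_d 0 \<mu>0 + (1 - q) * dens_d x \<mu>0 - info \<mu>0 - lam * ((1 - q) * x^2 - \<gamma>) \<le> 0"
    by (rule lam_abstract[OF assms(2,3,1)]) (rule three_point[OF assms(1-4) max])
  then show "\<exists>lam\<ge>0. \<forall>x. g_lam \<gamma> q lam x \<mu>0 \<le> 0" by (simp add: g_expand)
next
  fix \<mu> assume "\<exists>lam\<ge>0. \<forall>x. g_lam \<gamma> q lam x \<mu>0 \<le> 0" "\<mu> \<in> Lambda \<gamma> q"
  then show "info \<mu> \<le> info \<mu>0" using sufficiency[OF assms] by blast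
next
  fix lam x
  assume h: "(\<forall>\<mu>\<in>Lambda \<gamma> q. info \<mu> \<le> info \<mu>0) \<and> 0 \<le> lam \<and> (\<forall>x. g_lam \<gamma> q lam x \<mu>0 \<le> 0)"
    and x: "x \<in> points_of_increase \<mu>0 - {0}"
  show "g_lam \<gamma> q lam x \<mu>0 = 0" using support[OF assms, of lam x] h x by auto
qed


thm_deps lemma6

end
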